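(* For every non-constant total symmetric Boolean function $f:\{0,1\}^n\to\{0,1\}$ with $n\ge 2$, $\mathrm{MM}'(f)=O(\sqrt{t_f\cdot n})$.
   Context: A Boolean function $f:\{0,1\}^n\to\{0,1\}$ is symmetric if $f(x)$ depends only on the Hamming weight $|x|$ (number of ones). For such $f$, $t_f$ is the minimum nonnegative integer $t$ such that $f$ is constant on all inputs $x$ with $t\le|x|\le n-t$. For $f$ with domain $D\subseteq\{0,1\}^n$, \[ \mathrm{MM}'(f)=\min_{w}\max_{x\in D}\sum_{i\in[n]} w(x,i) \] over weight functions $w:D\times[n]\to\mathbb{R}_{\ge0}$ subject to $\sum_{i:x_i\neq y_i} w(x,i)\,w(y,i)\ge 1$ for all $x,y\in D$ with $f(x)\neq f(y)$. *)

theory Defs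
  imports Complex_Main
begin

text \<open>Inputs in {0,1}^n are represented as boolean lists of length n
  (True = 1); coordinates are indexed by positions 0..n-1.\<close>

definition cube :: "nat \<Rightarrow> bool list set" where
  "cube n = {x. length x = n}"

definition hw :: "bool list \<Rightarrow> nat" where
  "hw x = count_list x True"

definition symmetric_fn :: "nat \<Rightarrow> (bool list \<Rightarrow> bool) \<Rightarrow> bool" where
  "symmetric_fn n f \<longleftrightarrow> (\<forall>x\<in>cube n. \<forall>y\<in>cube n. hw x = hw y \<longrightarrow> f x = f y)"

definition nonconstant_fn :: "nat \<Rightarrow> (bool list \<Rightarrow> bool) \<Rightarrow> bool" where
  "nonconstant_fn n f \<longleftrightarrow> (\<exists>x\<in>cube n. \<exists>y\<in>cube n. f x \<noteq> f y)"

definition t_f :: "nat \<Rightarrow> (bool list \<Rightarrow> bool) \<Rightarrow> nat" where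
  "t_f n f = (LEAST t. \<forall>x\<in>cube n. \<forall>y\<in>cube n.
      t \<le> hw x \<and> hw x \<le> n - t \<and> t \<le> hw y \<and> hw y \<le> n - t \<longrightarrow> f x = f y)"

definition feasible_weight ::
  "bool list set \<Rightarrow> nat \<Rightarrow> (bool list \<Rightarrow> bool) \<Rightarrow> (bool list \<Rightarrow> nat \<Rightarrow> real) \<Rightarrow> bool" where
  "feasible_weight D n f w \<longleftrightarrow>
     (\<forall>x\<in>D. \<forall>i<n. 0 \<le> w x i) \<and>
     (\<forall>x\<in>D. \<forall>y\<in>D. f x \<noteq> f y \<longrightarrow>
        1 \<le> (\<Sum>i\<in>{i. i < n \<and> x ! i \<noteq> y ! i}. w x i * w y i))"

definition MM' :: "bool list set \<Rightarrow> nat \<Rightarrow> (bool list \<Rightarrow> bool) \<Rightarrow> real" where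
  "MM' D n f = Inf ((\<lambda>w. Max ((\<lambda>x. \<Sum>i<n. w x i) ` D)) ` {w. feasible_weight D n f w})"

end

theory Submission
  imports Defs
begin
definition sc :: "nat \<Rightarrow> nat \<Rightarrow> real" where "sc n t = sqrt (real n / real t)"
definition al :: "nat \<Rightarrow> nat \<Rightarrow> nat \<Rightarrow> real" where
  "al n t l = sc n t / min (real n / real t) (max 1 (real l - real t + 1))"
definition be :: "nat \<Rightarrow> nat \<Rightarrow> nat \<Rightarrow> real" where
  "be n t k = sc n t / min (real n / real t) (max 1 (real n - real k - real t + 1))"

context fixes n t :: nat assumes t1: "1 \<le> t" and tn: "t \<le> n"
begin

lemma S2ge: "1 \<le> real n / real t" using t1 tn by simp
lemma sc_pos: "0 < sc n t" unfolding sc_def using S2ge by simp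
lemma sc_sq: "sc n t * sc n t = real n / real t" unfolding sc_def using S2ge by simp

lemma den_ge: "1 \<le> min (real n / real t) (max 1 a)" using S2ge by simp

lemma al_pos: "0 < al n t l" unfolding al_def using sc_pos den_ge[of "real l - real t + 1"] by simp
lemma be_pos: "0 < be n t l" unfolding be_def using sc_pos den_ge[of "real n - real l - real t + 1"] by simp

lemma low_gen: "1 / sc n t \<le> sc n t / min (real n / real t) (max 1 a)"
proof -
  have d: "0 < min (real n / real t) (max 1 a)" using den_ge[of a] by simp
  have p: "0 < real n / real t * min (real n / real t) (max 1 a)"
    by (rule mult_pos_pos) (use d S2ge in auto)
  have "sc n t / min (real n / real t) (max 1 a) \<ge> sc n t / (real n / real t)"
    by (rule divide_left_mono) (use p sc_pos in auto)
  moreover have "sc n t / (real n / real t) = sc n t / (sc n t * sc n t)"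
    using sc_sq by simp
  moreover have "sc n t / (sc n t * sc n t) = 1 / sc n t" using sc_pos by simp
  ultimately show ?thesis by simp
qed

lemma up_gen: assumes "max 1 a \<le> d" shows "sc n t / d \<le> sc n t / min (real n / real t) (max 1 a)"
proof -
  have d: "0 < min (real n / real t) (max 1 a)" using den_ge[of a] by simp
  have "min (real n / real t) (max 1 a) \<le> d" using assms by linarith
  thus ?thesis using d sc_pos by (intro divide_left_mono) auto
qed

lemma key: assumes "k < l" "k < t \<or> n - t < l" "l \<le> n"
  shows "1 \<le> real (l - k) * (be n t k * al n t l)"
proof -
  have lk: "real (l - k) = real l - real k" "real l - real k \<ge> 1" using assms(1) by auto
  have "1 / sc n t * (sc n t / (real l - real k)) \<le> be n t k * al n t l"
  proof (cases "k < t")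
    case True
    have "1 / sc n t \<le> be n t k" unfolding be_def by (rule low_gen)
    moreover have "sc n t / (real l - real k) \<le> al n t l" unfolding al_def
      by (rule up_gen) (use True lk in linarith)
    ultimately show ?thesis using sc_pos lk less_imp_le[OF al_pos] less_imp_le[OF be_pos] by (intro mult_mono) auto
  next
    case False
    hence "n - t < l" using assms by auto
    hence "n + 1 \<le> l + t" using tn by linarith
    hence "real (n + 1) \<le> real (l + t)" by (simp only: of_nat_le_iff)
    hence "real n - real t < real l" "real n + 1 \<le> real l + real t" by simp_all
    have "sc n t / (real l - real k) \<le> be n t k" unfolding be_def
      by (rule up_gen) (use \<open>real n + 1 \<le> real l + real t\<close> lk in linarith)
    moreover have "1 / sc n t \<le> al n t l" unfolding al_def by (rule low_gen)
    ultimately have "sc n t / (real l - real k) * (1 / sc n t) \<le> be n t k * al n t l"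
      using sc_pos lk less_imp_le[OF al_pos] less_imp_le[OF be_pos] by (intro mult_mono) auto
    thus ?thesis by (simp only: mult.commute)
  qed
  moreover have "1 / sc n t * (sc n t / (real l - real k)) = 1 / (real l - real k)"
    using sc_pos by simp
  ultimately have "1 / (real l - real k) \<le> be n t k * al n t l" by (simp only:)
  thus ?thesis using lk by (simp add: field_simps)
qed

lemma cost_al: assumes "l \<le> n" shows "real l * al n t l \<le> sc n t * real t"
proof -
  let ?M = "min (real n / real t) (max 1 (real l - real t + 1))"
  have M1: "1 \<le> ?M" by (rule den_ge)
  have "real l * sc n t \<le> sc n t * real t * ?M"
  proof (cases "?M = real n / real t")
    case True
    have "sc n t * real t * (real n / real t) = sc n t * real n" using t1 by simp
    thus ?thesis using True assms sc_pos by simp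
  next
    case False
    hence M: "?M = max 1 (real l - real t + 1)" by linarith
    have "real l \<le> real t * max 1 (real l - real t + 1)"
    proof (cases "l \<le> t")
      case True
      have "real t * 1 \<le> real t * max 1 (real l - real t + 1)" by (rule mult_left_mono) auto
      thus ?thesis using True by simp
    next
      case False
      have "0 \<le> (real t - 1) * (real l - real t)" using False t1 by simp
      hence "real l \<le> real t * (real l - real t + 1)" by (simp add: algebra_simps)
      moreover have "real t * (real l - real t + 1) \<le> real t * max 1 (real l - real t + 1)" by (rule mult_left_mono) auto
      ultimately show ?thesis by linarith
    qed
    hence "real l * sc n t \<le> (real t * max 1 (real l - real t + 1)) * sc n t"
      using sc_pos by (intro mult_right_mono) auto
    thus ?thesis using M by (simp add: algebra_simps)
  qed
  thus ?thesis unfolding al_def using M1 by (simp add: field_simps)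
qed

lemma be_al: "k \<le> n \<Longrightarrow> be n t k = al n t (n - k)"
  unfolding be_def al_def by (simp add: of_nat_diff)

lemma sct: "sc n t * real t = sqrt (real t * real n)"
proof -
  have h: "sqrt (real t * real t) = real t" by simp
  have "sc n t * real t = sqrt (real n / real t) * sqrt (real t * real t)" by (simp only: sc_def h)
  also have "... = sqrt (real n / real t * (real t * real t))" by (simp only: real_sqrt_mult)
  also have "real n / real t * (real t * real t) = real t * real n" using t1 by simp
  finally show ?thesis .
qed

end
definition wt :: "nat \<Rightarrow> nat \<Rightarrow> bool list \<Rightarrow> nat \<Rightarrow> real" where
  "wt n t x i = (if x ! i then al n t (hw x) else be n t (hw x))"

lemma hw_card: "length x = n \<Longrightarrow> hw x = card {i. i < n \<and> x ! i}"
  unfolding hw_def count_list_eq_length_filter length_filter_conv_card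
  by (metis (full_types))

lemma hw_le: "length x = n \<Longrightarrow> hw x \<le> n"
  unfolding hw_def by (metis count_le_length)

lemma finite_cube: "finite (cube n)"
proof -
  have "cube n = {xs. set xs \<subseteq> (UNIV::bool set) \<and> length xs = n}" unfolding cube_def by auto
  thus ?thesis using finite_lists_length_eq[of "UNIV::bool set" n] by simp
qed

lemma card_split: "card {i. i < n \<and> x ! i} + card {i. i < n \<and> \<not> x ! i} = n"
proof -
  have "{i. i < n \<and> x ! i} \<union> {i. i < n \<and> \<not> x ! i} = {..<n}" by auto
  moreover have "card ({i. i < n \<and> x ! i} \<union> {i. i < n \<and> \<not> x ! i}) =
      card {i. i < n \<and> x ! i} + card {i. i < n \<and> \<not> x ! i}"
    by (rule card_Un_disjoint) auto
  ultimately show ?thesis by simp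
qed

lemma sum_split: assumes "length x = n"
  shows "(\<Sum>i<n. (if x ! i then a else b)) = real (hw x) * a + real (n - hw x) * (b::real)"
proof -
  have e1: "{..<n} \<inter> {i. x ! i} = {i. i < n \<and> x ! i}" by auto
  have e2: "{..<n} \<inter> - {i. x ! i} = {i. i < n \<and> \<not> x ! i}" by auto
  have c: "card {i. i < n \<and> \<not> x ! i} = n - hw x"
    using card_split[of n x] hw_card[OF assms] by simp
  have "(\<Sum>i<n. (if x ! i then a else b)) = (\<Sum>i\<in>{i. i < n \<and> x ! i}. a) + (\<Sum>i\<in>{i. i < n \<and> \<not> x ! i}. b)"
    by (simp only: sum.If_cases[OF finite_lessThan] e1 e2)
  also have "\<dots> = real (hw x) * a + real (n - hw x) * b"
    using c hw_card[OF assms] by simp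
  finally show ?thesis .
qed

lemma Q_bound: assumes "length x = n" "length y = n"
  shows "hw y \<le> hw x + card {i. i < n \<and> \<not> x ! i \<and> y ! i}"
proof -
  have "{i. i < n \<and> y ! i} \<subseteq> {i. i < n \<and> x ! i} \<union> {i. i < n \<and> \<not> x ! i \<and> y ! i}" by auto
  hence "card {i. i < n \<and> y ! i} \<le> card ({i. i < n \<and> x ! i} \<union> {i. i < n \<and> \<not> x ! i \<and> y ! i})"
    by (intro card_mono) auto
  also have "\<dots> \<le> card {i. i < n \<and> x ! i} + card {i. i < n \<and> \<not> x ! i \<and> y ! i}"
    by (rule card_Un_le)
  finally show ?thesis using hw_card assms by simp
qed

lemma wt_nonneg: "1 \<le> t \<Longrightarrow> t \<le> n \<Longrightarrow> 0 \<le> wt n t x i"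
  unfolding wt_def using al_pos be_pos by (simp add: less_imp_le)

lemma feas_lt:
  assumes t1: "1 \<le> t" and tn: "t \<le> n"
    and P: "\<forall>x\<in>cube n. \<forall>y\<in>cube n.
      t \<le> hw x \<and> hw x \<le> n - t \<and> t \<le> hw y \<and> hw y \<le> n - t \<longrightarrow> f x = f y"
    and x: "x \<in> cube n" and y: "y \<in> cube n" and fxy: "f x \<noteq> f y" and lt: "hw x < hw y"
  shows "1 \<le> (\<Sum>i\<in>{i. i < n \<and> x ! i \<noteq> y ! i}. wt n t x i * wt n t y i)"
proof -
  have lx: "length x = n" and ly: "length y = n" using x y unfolding cube_def by auto
  define k where "k = hw x"
  define l where "l = hw y"
  have ln: "l \<le> n" unfolding l_def using hw_le[OF ly] .
  have c: "k < t \<or> n - t < l"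
  proof (rule ccontr)
    assume "\<not> (k < t \<or> n - t < l)"
    hence "t \<le> hw x \<and> hw x \<le> n - t \<and> t \<le> hw y \<and> hw y \<le> n - t"
      using lt unfolding k_def l_def by linarith
    thus False using P x y fxy by blast
  qed
  have kl: "1 \<le> real (l - k) * (be n t k * al n t l)"
    by (rule key[OF t1 tn]) (use lt c ln in \<open>auto simp: k_def l_def\<close>)
  define Q where "Q = {i. i < n \<and> \<not> x ! i \<and> y ! i}"
  have cq: "l - k \<le> card Q" using Q_bound[OF lx ly] unfolding Q_def k_def l_def by linarith
  have pos: "0 \<le> be n t k * al n t l" using al_pos[OF t1 tn] be_pos[OF t1 tn] by (simp add: less_imp_le)
  have "real (l - k) * (be n t k * al n t l) \<le> real (card Q) * (be n t k * al n t l)"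
    using cq pos by (intro mult_right_mono) auto
  also have "\<dots> = (\<Sum>i\<in>Q. wt n t x i * wt n t y i)"
    unfolding Q_def wt_def k_def l_def by simp
  also have "\<dots> \<le> (\<Sum>i\<in>{i. i < n \<and> x ! i \<noteq> y ! i}. wt n t x i * wt n t y i)"
    by (rule sum_mono2) (auto simp: Q_def wt_nonneg[OF t1 tn])
  finally show ?thesis using kl by linarith
qed

theorem mainTheorem5:
  shows "\<exists>C>0. \<forall>n\<ge>2. \<forall>f :: bool list \<Rightarrow> bool.
           symmetric_fn n f \<and> nonconstant_fn n f \<longrightarrow>
           MM' (cube n) n f \<le> C * sqrt (real (t_f n f) * real n)"
proof (intro exI[of _ 2] conjI allI impI)
  fix n :: nat and f :: "bool list \<Rightarrow> bool"
  assume n2: "2 \<le> n" and sf: "symmetric_fn n f \<and> nonconstant_fn n f"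
  define t where "t = t_f n f"
  let ?P = "\<lambda>t. \<forall>x\<in>cube n. \<forall>y\<in>cube n.
      t \<le> hw x \<and> hw x \<le> n - t \<and> t \<le> hw y \<and> hw y \<le> n - t \<longrightarrow> f x = f y"
  have Pn: "?P n" using n2 by auto
  have P: "?P t" unfolding t_def t_f_def by (rule LeastI[of ?P n]) (rule Pn)
  have tn: "t \<le> n" unfolding t_def t_f_def by (rule Least_le) (rule Pn)
  have t1: "1 \<le> t"
  proof (rule ccontr)
    assume "\<not> 1 \<le> t" hence t0: "t = 0" by simp
    obtain x y where xy: "x \<in> cube n" "y \<in> cube n" "f x \<noteq> f y"
      using sf unfolding nonconstant_fn_def by blast
    have lx: "length x = n" and ly: "length y = n" using xy unfolding cube_def by auto
    have "hw x \<le> n" "hw y \<le> n" using hw_le[OF lx] hw_le[OF ly] by auto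
    hence "t \<le> hw x \<and> hw x \<le> n - t \<and> t \<le> hw y \<and> hw y \<le> n - t" using t0 by simp
    hence "f x = f y" using P xy(1,2) by blast
    thus False using xy(3) by simp
  qed
  define w where "w = wt n t"
  have feas: "feasible_weight (cube n) n f w"
    unfolding feasible_weight_def
  proof (intro conjI ballI allI impI)
    fix x i assume "x \<in> cube n" "i < n"
    show "0 \<le> w x i" unfolding w_def by (rule wt_nonneg[OF t1 tn])
  next
    fix x y assume x: "x \<in> cube n" and y: "y \<in> cube n" and fxy: "f x \<noteq> f y"
    have "hw x \<noteq> hw y"
    proof
      assume "hw x = hw y"
      hence "f x = f y" using sf x y unfolding symmetric_fn_def by blast
      thus False using fxy by simp
    qed
    then consider "hw x < hw y" | "hw y < hw x" by linarith
    thus "1 \<le> (\<Sum>i\<in>{i. i < n \<and> x ! i \<noteq> y ! i}. w x i * w y i)"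
    proof cases
      case 1 thus ?thesis unfolding w_def using feas_lt[OF t1 tn P x y fxy] by blast
    next
      case 2
      have "1 \<le> (\<Sum>i\<in>{i. i < n \<and> y ! i \<noteq> x ! i}. w y i * w x i)"
        unfolding w_def by (rule feas_lt[OF t1 tn P y x not_sym[OF fxy] 2])
      also have "{i. i < n \<and> y ! i \<noteq> x ! i} = {i. i < n \<and> x ! i \<noteq> y ! i}" by auto
      also have "(\<Sum>i\<in>{i. i < n \<and> x ! i \<noteq> y ! i}. w y i * w x i) = (\<Sum>i\<in>{i. i < n \<and> x ! i \<noteq> y ! i}. w x i * w y i)"
        by (rule sum.cong) (simp_all only: mult.commute)
      finally show ?thesis .
    qed
  qed
  have "replicate n False \<in> cube n" unfolding cube_def by simp
  hence ne: "cube n \<noteq> {}" by blast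
  have cost: "(\<Sum>i<n. w x i) \<le> 2 * sqrt (real t * real n)" if x: "x \<in> cube n" for x
  proof -
    have lx: "length x = n" using x unfolding cube_def by simp
    have hn: "hw x \<le> n" using hw_le[OF lx] .
    have "(\<Sum>i<n. w x i) = real (hw x) * al n t (hw x) + real (n - hw x) * be n t (hw x)"
      unfolding w_def wt_def by (rule sum_split[OF lx])
    also have "be n t (hw x) = al n t (n - hw x)" by (rule be_al[OF t1 tn hn])
    also have "real (hw x) * al n t (hw x) \<le> sc n t * real t" by (rule cost_al[OF t1 tn hn])
    also have "real (n - hw x) * al n t (n - hw x) \<le> sc n t * real t" by (rule cost_al[OF t1 tn]) simp
    also have "sc n t * real t = sqrt (real t * real n)" by (rule sct[OF t1 tn])
    finally show ?thesis by simp
  qed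
  have mx: "Max ((\<lambda>x. \<Sum>i<n. w x i) ` cube n) \<le> 2 * sqrt (real t * real n)"
    using cost ne finite_cube by (subst Max_le_iff) auto
  have bdd: "bdd_below ((\<lambda>w. Max ((\<lambda>x. \<Sum>i<n. w x i) ` cube n)) ` {w. feasible_weight (cube n) n f w})"
  proof (rule bdd_belowI[of _ 0])
    fix v assume "v \<in> (\<lambda>w. Max ((\<lambda>x. \<Sum>i<n. w x i) ` cube n)) ` {w. feasible_weight (cube n) n f w}"
    then obtain u where u: "feasible_weight (cube n) n f u" and v: "v = Max ((\<lambda>x. \<Sum>i<n. u x i) ` cube n)" by auto
    obtain x0 where x0: "x0 \<in> cube n" using ne by blast
    have "0 \<le> (\<Sum>i<n. u x0 i)" using u x0 unfolding feasible_weight_def by (intro sum_nonneg) auto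
    also have "\<dots> \<le> v" unfolding v using x0 finite_cube by (intro Max_ge) auto
    finally show "0 \<le> v" .
  qed
  have "MM' (cube n) n f \<le> Max ((\<lambda>x. \<Sum>i<n. w x i) ` cube n)"
    unfolding MM'_def by (rule cInf_lower[OF _ bdd]) (use feas in auto)
  with mx show "MM' (cube n) n f \<le> 2 * sqrt (real (t_f n f) * real n)" unfolding t_def by linarith
qed simp

end
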